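(* Let $G=(V,E)$ be a control flow graph and $p$ a predicate node. All successors of $p$ in $A_p$ belong to the same strongly connected component of $A_p$.
   Context: A control flow graph (CFG) is a finite directed graph $G=(V,E)$ in which every node has at most two outgoing edges; nodes with exactly two outgoing edges are predicate nodes. A path from $n_1$ is a nonempty finite or infinite sequence of nodes with each adjacent pair an edge; it is maximal if it is infinite or its last node has no successor. $V_p$ is the set of nodes occurring on all maximal paths from $p$ in $G$. For $V'\subseteq V$, a $V'$-interval from $x$ to $y$ is a finite path $n_1\ldots n_k$ in $G$ with $k\ge 2$, $n_1=x\in V'$, $n_k=y\in V'$, and $n_i\notin V'$ for $1<i<k$. $A_p$ is the directed graph with node set $V_p$ and an edge $(x,y)$ iff there is a $V_p$-interval from $x$ to $y$ in $G$. *)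

theory Defs
  imports Main
begin

definition succs :: "('a \<times> 'a) set \<Rightarrow> 'a \<Rightarrow> 'a set" where
  "succs E n = {m. (n, m) \<in> E}"

definition cfg :: "'a set \<Rightarrow> ('a \<times> 'a) set \<Rightarrow> bool" where
  "cfg V E \<longleftrightarrow> finite V \<and> E \<subseteq> V \<times> V \<and> (\<forall>n\<in>V. card (succs E n) \<le> 2)"

definition predicate_node :: "'a set \<Rightarrow> ('a \<times> 'a) set \<Rightarrow> 'a \<Rightarrow> bool" where
  "predicate_node V E p \<longleftrightarrow> p \<in> V \<and> card (succs E p) = 2"

definition fin_path :: "('a \<times> 'a) set \<Rightarrow> 'a list \<Rightarrow> bool" where
  "fin_path E xs \<longleftrightarrow> xs \<noteq> [] \<and> (\<forall>i. Suc i < length xs \<longrightarrow> (xs ! i, xs ! Suc i) \<in> E)"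

definition inf_path :: "('a \<times> 'a) set \<Rightarrow> (nat \<Rightarrow> 'a) \<Rightarrow> bool" where
  "inf_path E f \<longleftrightarrow> (\<forall>i. (f i, f (Suc i)) \<in> E)"

definition max_fin_path_from :: "('a \<times> 'a) set \<Rightarrow> 'a \<Rightarrow> 'a list \<Rightarrow> bool" where
  "max_fin_path_from E p xs \<longleftrightarrow> fin_path E xs \<and> hd xs = p \<and> succs E (last xs) = {}"

definition inf_path_from :: "('a \<times> 'a) set \<Rightarrow> 'a \<Rightarrow> (nat \<Rightarrow> 'a) \<Rightarrow> bool" where
  "inf_path_from E p f \<longleftrightarrow> inf_path E f \<and> f 0 = p"

definition Vp :: "'a set \<Rightarrow> ('a \<times> 'a) set \<Rightarrow> 'a \<Rightarrow> 'a set" where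
  "Vp V E p = {n \<in> V.
     (\<forall>xs. max_fin_path_from E p xs \<longrightarrow> n \<in> set xs) \<and>
     (\<forall>f. inf_path_from E p f \<longrightarrow> n \<in> range f)}"

definition interval :: "('a \<times> 'a) set \<Rightarrow> 'a set \<Rightarrow> 'a \<Rightarrow> 'a \<Rightarrow> 'a list \<Rightarrow> bool" where
  "interval E V' x y xs \<longleftrightarrow> fin_path E xs \<and> length xs \<ge> 2 \<and>
     hd xs = x \<and> x \<in> V' \<and> last xs = y \<and> y \<in> V' \<and>
     (\<forall>i. 0 < i \<and> i < length xs - 1 \<longrightarrow> xs ! i \<notin> V')"

text \<open>Edge relation of A_p (node set V_p).\<close>
definition Ap_edges :: "'a set \<Rightarrow> ('a \<times> 'a) set \<Rightarrow> 'a \<Rightarrow> ('a \<times> 'a) set" where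
  "Ap_edges V E p = {(x, y). \<exists>xs. interval E (Vp V E p) x y xs}"

end

theory Submission
  imports Defs
begin

lemma fin_path_take:
  assumes "fin_path E xs" "0 < n" shows "fin_path E (take n xs)"
  using assms unfolding fin_path_def by auto

lemma fin_path_drop:
  assumes "fin_path E xs" "n < length xs" shows "fin_path E (drop n xs)"
  using assms unfolding fin_path_def by auto

lemma path_Ap:
  assumes "fin_path E xs" "hd xs \<in> Vp V E p" "last xs \<in> Vp V E p"
  shows "(hd xs, last xs) \<in> (Ap_edges V E p)\<^sup>*"
  using assms
proof (induction "length xs" arbitrary: xs rule: less_induct)
  case less
  let ?W = "Vp V E p"
  have ne: "xs \<noteq> []" using less.prems fin_path_def by auto
  show ?case
  proof (cases "length xs = 1")
    case True
    then obtain a where "xs = [a]" by (cases xs) auto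
    then show ?thesis by simp
  next
    case False
    with ne have len: "length xs \<ge> 2" by (cases xs) (auto simp: Suc_le_eq)
    define P where "P = (\<lambda>i. 0 < i \<and> xs ! i \<in> ?W)"
    have Pex: "P (length xs - 1)" using len less.prems(3) ne
      unfolding P_def by (simp add: last_conv_nth)
    define i where "i = (LEAST i. P i)"
    have Pi: "P i" unfolding i_def by (rule LeastI, rule Pex)
    have ile: "i \<le> length xs - 1" unfolding i_def by (rule Least_le, rule Pex)
    have notW: "\<And>j. 0 < j \<Longrightarrow> j < i \<Longrightarrow> xs ! j \<notin> ?W"
      using not_less_Least[of _ P] unfolding i_def[symmetric] by (auto simp: P_def)
    have ipos: "0 < i" using Pi P_def by auto
    have int: "interval E ?W (hd xs) (xs ! i) (take (Suc i) xs)"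
      unfolding interval_def
    proof (intro conjI allI impI)
      show "fin_path E (take (Suc i) xs)" using fin_path_take less.prems(1) by auto
      show "2 \<le> length (take (Suc i) xs)" using ipos ile len by auto
      show "hd (take (Suc i) xs) = hd xs" using ne by simp
      show "hd xs \<in> ?W" by fact
      have "take (Suc i) xs \<noteq> []" using ne by simp
      moreover have "length (take (Suc i) xs) = Suc i" using ile len by auto
      ultimately show "last (take (Suc i) xs) = xs ! i"
        by (simp add: last_conv_nth)
      show "xs ! i \<in> ?W" using Pi P_def by auto
      fix j assume "0 < j \<and> j < length (take (Suc i) xs) - 1"
      then show "take (Suc i) xs ! j \<notin> ?W" using notW ile len by auto
    qed
    hence e: "(hd xs, xs ! i) \<in> Ap_edges V E p" unfolding Ap_edges_def by blast
    have ilt: "i < length xs" using ile len by auto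
    have "(hd (drop i xs), last (drop i xs)) \<in> (Ap_edges V E p)\<^sup>*"
      apply (rule less.hyps)
      using ipos ilt less.prems fin_path_drop Pi P_def by (auto simp: hd_drop_conv_nth)
    hence "(xs ! i, last xs) \<in> (Ap_edges V E p)\<^sup>*" using ilt by (simp add: hd_drop_conv_nth)
    with e show ?thesis by simp
  qed
qed

lemma max_path_exists:
  "(\<exists>zs. max_fin_path_from E x zs) \<or> (\<exists>f. inf_path_from E x f)"
proof -
  define f where "f = rec_nat x (\<lambda>_ y. if succs E y \<noteq> {} then (SOME m. (y,m) \<in> E) else y)"
  have f0: "f 0 = x" unfolding f_def by simp
  have fS: "succs E (f n) \<noteq> {} \<Longrightarrow> (f n, f (Suc n)) \<in> E" for n
  proof -
    assume "succs E (f n) \<noteq> {}"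
    then obtain m where "(f n, m) \<in> E" unfolding succs_def by auto
    hence "(f n, SOME m. (f n, m) \<in> E) \<in> E" by (rule someI)
    thus ?thesis using \<open>succs E (f n) \<noteq> {}\<close> unfolding f_def by simp
  qed
  show ?thesis
  proof (cases "\<forall>n. succs E (f n) \<noteq> {}")
    case True
    hence "inf_path_from E x f" unfolding inf_path_from_def inf_path_def using fS f0 by auto
    thus ?thesis by blast
  next
    case False
    define P where "P = (\<lambda>n. succs E (f n) = {})"
    from False obtain n0 where "P n0" unfolding P_def by auto
    define n where "n = (LEAST n. P n)"
    have Pn: "P n" unfolding n_def by (rule LeastI, fact)
    have lt: "k < n \<Longrightarrow> succs E (f k) \<noteq> {}" for k
    proof -
      assume "k < n"
      hence "\<not> P k" unfolding n_def by (rule not_less_Least)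
      thus ?thesis unfolding P_def by simp
    qed
    define zs where "zs = map f [0..<Suc n]"
    have "max_fin_path_from E x zs"
      unfolding max_fin_path_from_def fin_path_def zs_def
    proof (intro conjI allI impI)
      fix i assume "Suc i < length (map f [0..<Suc n])"
      hence "i < n" by simp
      thus "(map f [0..<Suc n] ! i, map f [0..<Suc n] ! Suc i) \<in> E"
        using fS lt by (simp del: upt_Suc)
    next
      show "hd (map f [0..<Suc n]) = x" using f0 by (simp del: upt_Suc add: hd_map hd_upt)
    next
      have "last (map f [0..<Suc n]) = f n" by (simp add: last_map)
      thus "succs E (last (map f [0..<Suc n])) = {}" using Pn P_def by simp
    qed simp
    thus ?thesis by blast
  qed
qed

lemma cycle_Vp:
  assumes "interval E (Vp V E p) p p cs" "y \<in> Vp V E p"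
  shows "y = p"
proof -
  let ?W = "Vp V E p"
  define L where "L = length cs - 1"
  have L1: "L \<ge> 1" using assms(1) unfolding interval_def L_def by auto
  have ne: "cs \<noteq> []" using assms(1) unfolding interval_def fin_path_def by auto
  have hd: "cs ! 0 = p" using assms(1) ne unfolding interval_def by (simp add: hd_conv_nth)
  have lst: "cs ! L = p" using assms(1) ne unfolding interval_def L_def by (simp add: last_conv_nth)
  have fp: "Suc i < length cs \<Longrightarrow> (cs ! i, cs ! Suc i) \<in> E" for i
    using assms(1) unfolding interval_def fin_path_def by auto
  define g where "g i = cs ! (i mod L)" for i
  have "inf_path_from E p g"
    unfolding inf_path_from_def inf_path_def
  proof (intro conjI allI)
    show "g 0 = p" using hd g_def by simp
  next
    fix i
    have kl: "i mod L < L" using L1 by simp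
    show "(g i, g (Suc i)) \<in> E"
    proof (cases "Suc (i mod L) = L")
      case True
      hence "g (Suc i) = p" using hd g_def by (simp add: mod_Suc)
      moreover have "(cs ! (i mod L), cs ! L) \<in> E" using fp[of "i mod L"] True L_def L1 by auto
      ultimately show ?thesis using lst g_def by simp
    next
      case False
      hence "g (Suc i) = cs ! Suc (i mod L)" using g_def by (simp add: mod_Suc)
      moreover have "(cs ! (i mod L), cs ! Suc (i mod L)) \<in> E" using fp kl L_def by auto
      ultimately show ?thesis using g_def by simp
    qed
  qed
  hence "y \<in> range g" using assms(2) unfolding Vp_def by auto
  then obtain i where yi: "y = cs ! (i mod L)" using g_def by auto
  show ?thesis
  proof (cases "i mod L = 0")
    case True thus ?thesis using yi hd by simp
  next
    case False
    hence "cs ! (i mod L) \<notin> ?W" using assms(1) L1 unfolding interval_def L_def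
      by (metis L_def One_nat_def bot_nat_0.not_eq_extremum mod_less_divisor order_less_le_trans zero_less_one)
    thus ?thesis using yi assms(2) by simp
  qed
qed

lemma interval_reach:
  assumes iv: "interval E (Vp V E p) p y1 ys" and y2: "y2 \<in> Vp V E p"
  shows "(y1, y2) \<in> (Ap_edges V E p)\<^sup>* \<or> y2 = p"
proof -
  let ?W = "Vp V E p"
  define L where "L = length ys - 1"
  have L1: "L \<ge> 1" using iv unfolding interval_def L_def by auto
  have ne: "ys \<noteq> []" using iv unfolding interval_def fin_path_def by auto
  have hd: "ys ! 0 = p" using iv ne unfolding interval_def by (simp add: hd_conv_nth)
  have lst: "ys ! L = y1" using iv ne unfolding interval_def L_def by (simp add: last_conv_nth)
  have y1W: "y1 \<in> ?W" using iv unfolding interval_def by blast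
  have intr: "\<And>i. 0 < i \<Longrightarrow> i < L \<Longrightarrow> ys ! i \<notin> ?W" using iv unfolding interval_def L_def by blast
  have fp: "Suc i < length ys \<Longrightarrow> (ys ! i, ys ! Suc i) \<in> E" for i
    using iv unfolding interval_def fin_path_def by auto
  have lenL: "length ys = Suc L" using L1 L_def by auto
  have early: "k < L \<Longrightarrow> ys ! k = y2 \<Longrightarrow> y2 = p" for k
  proof -
    assume k: "k < L" "ys ! k = y2"
    show "y2 = p"
    proof (cases "k = 0")
      case True thus ?thesis using k hd by simp
    next
      case False
      hence "ys ! k \<notin> ?W" using intr[of k] k(1) by simp
      thus ?thesis using k y2 by simp
    qed
  qed
  consider (fin) zs where "max_fin_path_from E y1 zs" | (inf) f where "inf_path_from E y1 f"
    using max_path_exists[of E y1] by (elim disjE exE) auto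
  then show ?thesis
  proof cases
    case fin
    have zne: "zs \<noteq> []" using fin unfolding max_fin_path_from_def fin_path_def by auto
    have z0: "zs ! 0 = y1" using fin zne unfolding max_fin_path_from_def by (simp add: hd_conv_nth)
    have zp: "Suc i < length zs \<Longrightarrow> (zs ! i, zs ! Suc i) \<in> E" for i
      using fin unfolding max_fin_path_from_def fin_path_def by auto
    define ws where "ws = take L ys @ zs"
    have ltk: "length (take L ys) = L" using lenL by simp
    have "max_fin_path_from E p ws"
      unfolding max_fin_path_from_def fin_path_def
    proof (intro conjI allI impI)
      show "ws \<noteq> []" using ws_def zne by simp
      show "hd ws = p" using ws_def L1 ne hd lenL by (cases ys; cases L) auto
      show "succs E (last ws) = {}" using fin zne ws_def unfolding max_fin_path_from_def by simp
      fix i assume i: "Suc i < length ws"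
      show "(ws ! i, ws ! Suc i) \<in> E"
      proof -
        consider "Suc i < L" | "Suc i = L" | "L \<le> i" by linarith
        then show ?thesis
        proof cases
          case 1 thus ?thesis using fp lenL ws_def by (simp add: nth_append ltk)
        next
          case 2 thus ?thesis using fp[of i] lenL ws_def z0 lst by (simp add: nth_append ltk)
        next
          case 3
          hence "ws ! i = zs ! (i - L)" "ws ! Suc i = zs ! Suc (i - L)"
            using ws_def lenL by (auto simp: nth_append Suc_diff_le)
          moreover have "Suc (i - L) < length zs" using i 3 ws_def ltk by auto
          ultimately show ?thesis using zp by simp
        qed
      qed
    qed
    hence "y2 \<in> set ws" using y2 unfolding Vp_def by auto
    hence "y2 \<in> set (take L ys) \<or> y2 \<in> set zs" using ws_def by auto
    thus ?thesis
    proof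
      assume "y2 \<in> set (take L ys)"
      then obtain k where "k < L" "take L ys ! k = y2" using ltk by (metis in_set_conv_nth)
      thus ?thesis using early by auto
    next
      assume "y2 \<in> set zs"
      then obtain m where m: "m < length zs" "zs ! m = y2" by (metis in_set_conv_nth)
      let ?ts = "take (Suc m) zs"
      have "fin_path E ?ts" using fin fin_path_take unfolding max_fin_path_from_def by auto
      moreover have "hd ?ts = y1" using z0 zne by (simp add: hd_conv_nth)
      moreover have "last ?ts = y2" using m by (simp add: take_Suc_conv_app_nth)
      ultimately have "(y1, y2) \<in> (Ap_edges V E p)\<^sup>*" using path_Ap y1W y2 by metis
      thus ?thesis by simp
    qed
  next
    case inf
    have f0: "f 0 = y1" and fe: "\<And>i. (f i, f (Suc i)) \<in> E"
      using inf unfolding inf_path_from_def inf_path_def by auto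
    define g where "g i = (if i < L then ys ! i else f (i - L))" for i
    have "inf_path_from E p g"
      unfolding inf_path_from_def inf_path_def
    proof (intro conjI allI)
      show "g 0 = p" using g_def hd L1 by simp
      fix i
      consider "Suc i < L" | "Suc i = L" | "L \<le> i" by linarith
      then show "(g i, g (Suc i)) \<in> E"
      proof cases
        case 1 thus ?thesis using fp lenL g_def by simp
      next
        case 2 thus ?thesis using fp[of i] lenL g_def f0 lst by simp
      next
        case 3 thus ?thesis using fe[of "i - L"] g_def by (simp add: Suc_diff_le)
      qed
    qed
    hence "y2 \<in> range g" using y2 unfolding Vp_def by auto
    then obtain j where j: "y2 = g j" by auto
    show ?thesis
    proof (cases "j < L")
      case True thus ?thesis using early j g_def by simp
    next
      case False
      define m where "m = j - L"
      have y2f: "y2 = f m" using j False g_def m_def by simp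
      let ?ts = "map f [0..<Suc m]"
      have "fin_path E ?ts" unfolding fin_path_def using fe by (simp del: upt_Suc)
      moreover have "hd ?ts = y1" using f0 by (simp del: upt_Suc add: hd_map hd_upt)
      moreover have "last ?ts = y2" using y2f by (simp add: last_map)
      ultimately have "(y1, y2) \<in> (Ap_edges V E p)\<^sup>*" using path_Ap y1W y2 by metis
      thus ?thesis by simp
    qed
  qed
qed

theorem lemma4p7:
  assumes "cfg V E"
    and "predicate_node V E p"
    and "(p, y1) \<in> Ap_edges V E p"
    and "(p, y2) \<in> Ap_edges V E p"
  shows "(y1, y2) \<in> (Ap_edges V E p)\<^sup>* \<and> (y2, y1) \<in> (Ap_edges V E p)\<^sup>*"
proof -
  obtain ys1 where i1: "interval E (Vp V E p) p y1 ys1" using assms(3) unfolding Ap_edges_def by auto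
  obtain ys2 where i2: "interval E (Vp V E p) p y2 ys2" using assms(4) unfolding Ap_edges_def by auto
  have w1: "y1 \<in> Vp V E p" and w2: "y2 \<in> Vp V E p" using i1 i2 unfolding interval_def by auto
  have "(y1, y2) \<in> (Ap_edges V E p)\<^sup>*"
  proof -
    have "(y1, y2) \<in> (Ap_edges V E p)\<^sup>* \<or> y2 = p" using interval_reach[OF i1 w2] .
    moreover have "y2 = p \<Longrightarrow> y1 = p" using cycle_Vp i2 w1 by metis
    ultimately show ?thesis by auto
  qed
  moreover have "(y2, y1) \<in> (Ap_edges V E p)\<^sup>*"
  proof -
    have "(y2, y1) \<in> (Ap_edges V E p)\<^sup>* \<or> y1 = p" using interval_reach[OF i2 w1] .
    moreover have "y1 = p \<Longrightarrow> y2 = p" using cycle_Vp i1 w2 by metis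
    ultimately show ?thesis by auto
  qed
  ultimately show ?thesis by simp
qed

end
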